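(* With $\hat A=T(V)/I$, $\hat q$, and $\hat x_j=x_j+I$ as constructed below, the set consisting of $\hat 1=1+I$, $\hat q$, all products $\hat x_{j_1}\cdots\hat x_{j_m}$ with $m\ge1$ and $(j_1,\dots,j_m)\in J^m$, and all products $\hat x_{j_1}\cdots\hat x_{j_t}\,\hat q\,\hat x_{j_{t+1}}\cdots\hat x_{j_m}$ with $m\ge1$, $0\le t\le m$, $(j_1,\dots,j_m)\in J^m$, is a $\mathbf{k}$-basis of $\hat A$ (these elements being pairwise distinct for distinct index data).
   Context: Let $X=\{x_j:j\in J\}$ be a set, $\tilde q\notin X$ a symbol, $V$ the $\mathbf{k}$-vector space with basis $X\cup\{\tilde q\}$, $T(V)$ its tensor algebra, $I$ the two-sided ideal of $T(V)$ generated by $\tilde q\otimes\tilde q-\tilde q$ and all $\tilde q\otimes a\otimes\tilde q-\tilde q\otimes a$ for $a\in T(V)$; $\hat A=T(V)/I$, $\hat q=\tilde q+I$, $\hat x_j=x_j+I$. *)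

theory Defs
  imports Main
begin

text \<open>Basis words of T(V) are lists over 'j option: Some j stands for x_j,
  None stands for the extra symbol q.  Elements of T(V) are finitely
  supported functions from words to the field 'k; multiplication is
  concatenation (convolution).\<close>

type_synonym 'j word = "'j option list"

definition TV :: "('j word \<Rightarrow> 'k::field) set" where
  "TV = {f. finite {w. f w \<noteq> 0}}"

definition mono :: "'j word \<Rightarrow> ('j word \<Rightarrow> 'k::field)" where
  "mono w = (\<lambda>u. if u = w then 1 else 0)"

definition tmul :: "('j word \<Rightarrow> 'k::field) \<Rightarrow> ('j word \<Rightarrow> 'k) \<Rightarrow> ('j word \<Rightarrow> 'k)" where
  "tmul f g = (\<lambda>w. \<Sum>n\<le>length w. f (take n w) * g (drop n w))"

definition tadd :: "('j word \<Rightarrow> 'k::field) \<Rightarrow> ('j word \<Rightarrow> 'k) \<Rightarrow> ('j word \<Rightarrow> 'k)" where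
  "tadd f g = (\<lambda>w. f w + g w)"

definition tdiff :: "('j word \<Rightarrow> 'k::field) \<Rightarrow> ('j word \<Rightarrow> 'k) \<Rightarrow> ('j word \<Rightarrow> 'k)" where
  "tdiff f g = (\<lambda>w. f w - g w)"

definition tscale :: "'k::field \<Rightarrow> ('j word \<Rightarrow> 'k) \<Rightarrow> ('j word \<Rightarrow> 'k)" where
  "tscale c f = (\<lambda>w. c * f w)"

definition gens :: "('j word \<Rightarrow> 'k::field) set" where
  "gens = {tdiff (mono [None, None]) (mono [None])} \<union>
          {tdiff (tmul (tmul (mono [None]) a) (mono [None])) (tmul (mono [None]) a) | a. a \<in> TV}"

inductive_set idealI :: "('j word \<Rightarrow> 'k::field) set" where
  gen: "g \<in> gens \<Longrightarrow> g \<in> idealI"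
| zero: "(\<lambda>_. 0) \<in> idealI"
| add: "a \<in> idealI \<Longrightarrow> b \<in> idealI \<Longrightarrow> tadd a b \<in> idealI"
| lmul: "f \<in> TV \<Longrightarrow> a \<in> idealI \<Longrightarrow> tmul f a \<in> idealI"
| rmul: "f \<in> TV \<Longrightarrow> a \<in> idealI \<Longrightarrow> tmul a f \<in> idealI"

datatype 'j bidx =
    BOne
  | BQ
  | BX "'j list"
  | BXQ "'j list" nat

fun valid_bidx :: "'j bidx \<Rightarrow> bool" where
  "valid_bidx BOne = True"
| "valid_bidx BQ = True"
| "valid_bidx (BX js) = (js \<noteq> [])"
| "valid_bidx (BXQ js t) = (js \<noteq> [] \<and> t \<le> length js)"

fun bword :: "'j bidx \<Rightarrow> 'j word" where
  "bword BOne = []"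
| "bword BQ = [None]"
| "bword (BX js) = map Some js"
| "bword (BXQ js t) = map Some (take t js) @ [None] @ map Some (drop t js)"

definition belem :: "'j bidx \<Rightarrow> ('j word \<Rightarrow> 'k::field)" where
  "belem b = mono (bword b)"

end

theory Submission
  imports Defs
begin


fun red :: "'j word \<Rightarrow> 'j word" where
  "red [] = []"
| "red (Some j # w) = Some j # red w"
| "red (None # w) = None # filter (\<lambda>x. x \<noteq> None) w"

lemma red_noNone: "None \<notin> set a \<Longrightarrow> red (a @ b) = a @ red b"
proof (induction a)
  case (Cons x a) then show ?case by (cases x) auto
qed simp

lemma red_None: "None \<in> set a \<Longrightarrow> red (a @ b) = red a @ filter (\<lambda>x. x \<noteq> None) b"
proof (induction a)
  case Nil then show ?case by simp
next
  case (Cons x a)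
  show ?case
  proof (cases x)
    case None then show ?thesis by simp
  next
    case (Some j) then show ?thesis using Cons by simp
  qed
qed

lemma red_id_noNone: "None \<notin> set a \<Longrightarrow> red a = a"
  using red_noNone[of a "[]"] by simp

lemma filter_red: "filter (\<lambda>x. x \<noteq> None) (red b) = filter (\<lambda>x. x \<noteq> None) b"
proof (induction b rule: red.induct)
  case 1 then show ?case by simp
next
  case (2 j w) then show ?case by simp
next
  case (3 w) then show ?case by (simp add: filter_filter)
qed

lemma filter_red': "filter (\<lambda>x. \<exists>y. x = Some y) (red b) = filter (\<lambda>x. \<exists>y. x = Some y) b"
  using filter_red[of b] by simp

lemma red_red: "red (red b) = red b"
proof (induction b rule: red.induct)
  case (3 w) then show ?case by (simp add: red_id_noNone)
qed auto

lemma red_app_right: "red (u1 @ u2) = red (u1 @ red u2)"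
  by (cases "None \<in> set u1") (auto simp: red_None red_noNone filter_red' red_red)

lemma None_red: "(None \<in> set (red a)) = (None \<in> set a)"
  by (induction a rule: red.induct) auto

lemma red_app_left: "red (u1 @ u2) = red (red u1 @ u2)"
  by (cases "None \<in> set u1") (auto simp: red_None red_noNone red_id_noNone red_red None_red)

lemma red_neq_split: "red w \<noteq> w \<Longrightarrow> \<exists>u1 v u2. w = u1 @ None # v @ None # u2"
proof (induction w rule: red.induct)
  case 1 then show ?case by simp
next
  case (2 j w)
  then obtain u1 v u2 where "w = u1 @ None # v @ None # u2" by auto
  then show ?case by (intro exI[of _ "Some j # u1"] exI[of _ v] exI[of _ u2]) simp
next
  case (3 w)
  then have "None \<in> set w" by (metis (mono_tags, lifting) filter_True red.simps(3))
  then obtain v u2 where "w = v @ None # u2" by (meson split_list)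
  then show ?case by (intro exI[of _ "[]"] exI[of _ v] exI[of _ u2]) simp
qed

lemma red_collapse: "red (u1 @ None # v @ None # u2) = red (u1 @ None # v @ u2)"
  by (cases "None \<in> set u1") (auto simp: red_None red_noNone)




abbreviation supp :: "('j word \<Rightarrow> 'k::field) \<Rightarrow> 'j word set" where
  "supp f \<equiv> {u. f u \<noteq> 0}"

lemma tmul_pairs:
  fixes f g :: "'j word \<Rightarrow> 'k::field"
  assumes "finite A" "finite B" "supp f \<subseteq> A" "supp g \<subseteq> B"
  shows "tmul f g w = (\<Sum>p\<in>A\<times>B. if fst p @ snd p = w then f (fst p) * g (snd p) else 0)"
proof -
  let ?h = "\<lambda>n. (take n w, drop n w)"
  let ?P = "{p. fst p @ snd p = w}"
  have inj: "inj_on ?h {..length w}"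
  proof (rule inj_onI)
    fix x y assume xy: "x \<in> {..length w}" "y \<in> {..length w}" "?h x = ?h y"
    then have "length (take x w) = length (take y w)" by simp
    then show "x = y" using xy(1,2) by simp
  qed
  have img: "?h ` {..length w} = ?P"
  proof
    show "?P \<subseteq> ?h ` {..length w}"
    proof
      fix p assume "p \<in> ?P"
      then have "p = ?h (length (fst p))" by (cases p) auto
      moreover have "length (fst p) \<le> length w" using \<open>p \<in> ?P\<close> by auto
      ultimately show "p \<in> ?h ` {..length w}" by blast
    qed
  qed auto
  have finP: "finite ?P" using img by (metis finite_atMost finite_imageI)
  have "tmul f g w = (\<Sum>p\<in>?h ` {..length w}. f (fst p) * g (snd p))"
    unfolding tmul_def by (subst sum.reindex[OF inj]) simp
  also have "\<dots> = (\<Sum>p\<in>?P. f (fst p) * g (snd p))" by (simp only: img)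
  also have "\<dots> = (\<Sum>p\<in>?P \<inter> (A\<times>B). f (fst p) * g (snd p))"
  proof (rule sum.mono_neutral_right[OF finP])
    show "?P \<inter> (A\<times>B) \<subseteq> ?P" by blast
    show "\<forall>p\<in>?P - ?P \<inter> (A\<times>B). f (fst p) * g (snd p) = 0"
    proof
      fix p assume "p \<in> ?P - ?P \<inter> (A\<times>B)"
      then have "fst p \<notin> A \<or> snd p \<notin> B" by (cases p) auto
      then have "f (fst p) = 0 \<or> g (snd p) = 0" using assms(3,4) by blast
      then show "f (fst p) * g (snd p) = 0" by auto
    qed
  qed
  also have "\<dots> = (\<Sum>p\<in>(A\<times>B) \<inter> ?P. f (fst p) * g (snd p))" by (simp add: Int_commute)
  also have "\<dots> = (\<Sum>p\<in>A\<times>B. if p \<in> ?P then f (fst p) * g (snd p) else 0)"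
    using assms by (subst sum.inter_restrict) auto
  finally show ?thesis by simp
qed




lemma supp_tmul: "supp (tmul f g) \<subseteq> (\<lambda>p. fst p @ snd p) ` (supp f \<times> supp g)"
proof
  fix w assume "w \<in> supp (tmul f g)"
  then have "(\<Sum>n\<le>length w. f (take n w) * g (drop n w)) \<noteq> 0" by (simp add: tmul_def)
  then obtain n where "f (take n w) * g (drop n w) \<noteq> 0"
  proof -
    assume s: "(\<Sum>n\<le>length w. f (take n w) * g (drop n w)) \<noteq> 0"
      and r: "\<And>n. f (take n w) * g (drop n w) \<noteq> 0 \<Longrightarrow> thesis"
    show thesis
    proof (rule ccontr)
      assume "\<not> thesis"
      then have "\<forall>n. f (take n w) * g (drop n w) = 0" using r by blast
      then have "(\<Sum>n\<le>length w. f (take n w) * g (drop n w)) = 0" by (auto intro!: sum.neutral)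
      then show False using s by simp
    qed
  qed
  show "w \<in> (\<lambda>p. fst p @ snd p) ` (supp f \<times> supp g)"
  proof (rule image_eqI[of _ _ "(take n w, drop n w)"])
    show "w = fst (take n w, drop n w) @ snd (take n w, drop n w)" by simp
    show "(take n w, drop n w) \<in> supp f \<times> supp g" using \<open>f (take n w) * g (drop n w) \<noteq> 0\<close> by simp
  qed
qed

lemma TV_tmul: "f \<in> TV \<Longrightarrow> g \<in> TV \<Longrightarrow> tmul f g \<in> TV"
proof -
  assume a: "f \<in> TV" "g \<in> TV"
  then have "finite (supp f \<times> supp g)" by (simp add: TV_def)
  then have "finite ((\<lambda>p. fst p @ snd p) ` (supp f \<times> supp g))" by (rule finite_imageI)
  then have "finite (supp (tmul f g))" using supp_tmul finite_subset by blast
  then show ?thesis by (simp add: TV_def)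
qed

lemma TV_tadd: "f \<in> TV \<Longrightarrow> g \<in> TV \<Longrightarrow> tadd f g \<in> TV"
proof -
  assume a: "f \<in> TV" "g \<in> TV"
  have "supp (tadd f g) \<subseteq> supp f \<union> supp g" by (auto simp: tadd_def)
  moreover have "finite (supp f \<union> supp g)" using a by (simp add: TV_def)
  ultimately show ?thesis unfolding TV_def using finite_subset by blast
qed

lemma TV_tdiff: "f \<in> TV \<Longrightarrow> g \<in> TV \<Longrightarrow> tdiff f g \<in> TV"
proof -
  assume a: "f \<in> TV" "g \<in> TV"
  have "supp (tdiff f g) \<subseteq> supp f \<union> supp g" by (auto simp: tdiff_def)
  moreover have "finite (supp f \<union> supp g)" using a by (simp add: TV_def)
  ultimately show ?thesis unfolding TV_def using finite_subset by blast
qed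

lemma supp_mono: "supp (Defs.mono w) \<subseteq> {w}"
  by (auto simp: Defs.mono_def)

lemma TV_mono: "Defs.mono w \<in> TV"
proof -
  have "finite (supp (Defs.mono w))" by (rule finite_subset[OF supp_mono]) simp
  then show ?thesis by (simp add: TV_def)
qed




definition Lr :: "('j word \<Rightarrow> 'k) \<Rightarrow> ('j word \<Rightarrow> 'k::field) \<Rightarrow> 'k" where
  "Lr k g = (\<Sum>u\<in>supp g. k u * g u)"

lemma Lr_eq: "finite F \<Longrightarrow> supp g \<subseteq> F \<Longrightarrow> Lr k g = (\<Sum>u\<in>F. k u * g u)"
  unfolding Lr_def by (intro sum.mono_neutral_left) auto

lemma Lr_tmul:
  fixes f g :: "'j word \<Rightarrow> 'k::field"
  assumes "finite A" "finite B" "supp f \<subseteq> A" "supp g \<subseteq> B"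
  shows "Lr k (tmul f g) = (\<Sum>a\<in>A. \<Sum>b\<in>B. k (a @ b) * f a * g b)"
proof -
  let ?C = "(\<lambda>p. fst p @ snd p) ` (A \<times> B)"
  have finC: "finite ?C" using assms by auto
  have sub: "supp (tmul f g) \<subseteq> ?C" using supp_tmul assms by fastforce
  have "Lr k (tmul f g) = (\<Sum>u\<in>?C. k u * tmul f g u)" by (rule Lr_eq[OF finC sub])
  also have "\<dots> = (\<Sum>u\<in>?C. \<Sum>p\<in>A\<times>B. if fst p @ snd p = u then k u * (f (fst p) * g (snd p)) else 0)"
    by (simp add: tmul_pairs[OF assms] sum_distrib_left if_distrib cong: if_cong)
  also have "\<dots> = (\<Sum>p\<in>A\<times>B. \<Sum>u\<in>?C. if fst p @ snd p = u then k u * (f (fst p) * g (snd p)) else 0)"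
    by (rule sum.swap)
  also have "\<dots> = (\<Sum>p\<in>A\<times>B. k (fst p @ snd p) * f (fst p) * g (snd p))"
  proof (rule sum.cong[OF refl])
    fix p assume p: "p \<in> A \<times> B"
    then have "fst p @ snd p \<in> ?C" by auto
    then show "(\<Sum>u\<in>?C. if fst p @ snd p = u then k u * (f (fst p) * g (snd p)) else 0)
        = k (fst p @ snd p) * f (fst p) * g (snd p)"
      using finC by (simp add: sum.delta mult.assoc)
  qed
  also have "\<dots> = (\<Sum>a\<in>A. \<Sum>b\<in>B. k (a @ b) * f a * g b)"
    by (simp add: sum.cartesian_product case_prod_beta)
  finally show ?thesis .
qed

lemma Lr_tdiff: "f \<in> TV \<Longrightarrow> g \<in> TV \<Longrightarrow> Lr k (tdiff f g) = Lr k f - Lr k g"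
proof -
  assume a: "f \<in> TV" "g \<in> TV"
  let ?F = "supp f \<union> supp g"
  have fin: "finite ?F" using a by (auto simp: TV_def)
  have sub: "supp (tdiff f g) \<subseteq> ?F" by (auto simp: tdiff_def)
  show ?thesis
    using Lr_eq[OF fin sub, of k] Lr_eq[OF fin, of f k] Lr_eq[OF fin, of g k]
    by (auto simp: tdiff_def sum_subtractf right_diff_distrib)
qed

lemma Lr_tadd: "f \<in> TV \<Longrightarrow> g \<in> TV \<Longrightarrow> Lr k (tadd f g) = Lr k f + Lr k g"
proof -
  assume a: "f \<in> TV" "g \<in> TV"
  let ?F = "supp f \<union> supp g"
  have fin: "finite ?F" using a by (auto simp: TV_def)
  have sub: "supp (tadd f g) \<subseteq> ?F" by (auto simp: tadd_def)
  show ?thesis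
    using Lr_eq[OF fin sub, of k] Lr_eq[OF fin, of f k] Lr_eq[OF fin, of g k]
    by (auto simp: tadd_def sum.distrib distrib_left)
qed

lemma Lr_mono: "Lr k (Defs.mono w) = k w"
  using Lr_eq[of "{w}" "Defs.mono w" k] supp_mono by (simp add: Defs.mono_def)




lemma ideal_inv: "g \<in> idealI \<Longrightarrow> g \<in> TV \<and> (\<forall>h. Lr (\<lambda>u. h (red u)) g = (0::'k::field))"
proof (induction g rule: idealI.induct)
  case (gen g)
  then show ?case
  proof (cases "g = tdiff (Defs.mono [None, None]) (Defs.mono [None])")
    case True
    then show ?thesis by (simp add: TV_tdiff TV_mono Lr_tdiff Lr_mono)
  next
    case False
    then obtain a where a: "a \<in> TV"
      and g: "g = tdiff (tmul (tmul (Defs.mono [None]) a) (Defs.mono [None])) (tmul (Defs.mono [None]) a)"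
      using gen unfolding gens_def by blast
    let ?q = "Defs.mono [None] :: 'a word \<Rightarrow> 'k"
    have qa: "tmul ?q a \<in> TV" using a TV_mono TV_tmul by blast
    have qaq: "tmul (tmul ?q a) ?q \<in> TV" using qa TV_mono TV_tmul by blast
    have fa: "finite (supp a)" using a by (simp add: TV_def)
    have fqa: "finite (supp (tmul ?q a))" using qa by (simp add: TV_def)
    have mq: "?q [None] = 1" by (simp add: Defs.mono_def)
    have L1: "Lr k (tmul ?q a) = (\<Sum>y\<in>supp a. k (None # y) * a y)" for k
      using Lr_tmul[of "{[None]}" "supp a" ?q a k] fa supp_mono[of "[None]"] mq by simp
    have L2: "Lr k (tmul (tmul ?q a) ?q) = Lr (\<lambda>u. k (u @ [None])) (tmul ?q a)" for k
    proof -
      have "Lr k (tmul (tmul ?q a) ?q) = (\<Sum>x\<in>supp (tmul ?q a). k (x @ [None]) * tmul ?q a x)"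
        using Lr_tmul[of "supp (tmul ?q a)" "{[None]}" "tmul ?q a" ?q k] fqa supp_mono[of "[None]"] mq
        by simp
      also have "\<dots> = Lr (\<lambda>u. k (u @ [None])) (tmul ?q a)"
        using Lr_eq[OF fqa, of "tmul ?q a"] by simp
      finally show ?thesis .
    qed
    show ?thesis
    proof
      show "g \<in> TV" using g qa qaq TV_tdiff by simp
      show "\<forall>h. Lr (\<lambda>u. h (red u)) g = 0"
      proof
        fix h :: "'a word \<Rightarrow> 'k"
        have "Lr (\<lambda>u. h (red u)) g = Lr (\<lambda>u. h (red u)) (tmul (tmul ?q a) ?q) - Lr (\<lambda>u. h (red u)) (tmul ?q a)"
          using g qa qaq Lr_tdiff by simp
        also have "\<dots> = 0" unfolding L2 L1 by simp
        finally show "Lr (\<lambda>u. h (red u)) g = 0" .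
      qed
    qed
  qed
next
  case zero
  then show ?case by (simp add: TV_def Lr_def)
next
  case (add a b)
  then show ?case by (simp add: TV_tadd Lr_tadd)
next
  case (lmul f a)
  have fa: "finite (supp a)" using lmul by (simp add: TV_def)
  have ff: "finite (supp f)" using lmul by (simp add: TV_def)
  show ?case
  proof
    show "tmul f a \<in> TV" using lmul TV_tmul by blast
    show "\<forall>h. Lr (\<lambda>u. h (red u)) (tmul f a) = 0"
    proof
      fix h :: "'a word \<Rightarrow> 'k"
      have "Lr (\<lambda>u. h (red u)) (tmul f a) = (\<Sum>x\<in>supp f. \<Sum>y\<in>supp a. h (red (x @ y)) * f x * a y)"
        using Lr_tmul[OF ff fa order_refl order_refl] by simp
      also have "\<dots> = (\<Sum>x\<in>supp f. f x * (\<Sum>y\<in>supp a. h (red (x @ red y)) * a y))"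
        by (simp add: sum_distrib_left red_app_right[symmetric] mult_ac)
      also have "\<dots> = (\<Sum>x\<in>supp f. f x * Lr (\<lambda>u. (\<lambda>v. h (red (x @ v))) (red u)) a)"
        by (simp add: Lr_def)
      also have "\<dots> = 0"
      proof -
        have "Lr (\<lambda>u. (\<lambda>v. h (red (x @ v))) (red u)) a = 0" for x
          using spec[OF conjunct2[OF lmul.IH], of "\<lambda>v. h (red (x @ v))"] by simp
        then show ?thesis by simp
      qed
      finally show "Lr (\<lambda>u. h (red u)) (tmul f a) = 0" .
    qed
  qed
next
  case (rmul f a)
  have fa: "finite (supp a)" using rmul by (simp add: TV_def)
  have ff: "finite (supp f)" using rmul by (simp add: TV_def)
  show ?case
  proof
    show "tmul a f \<in> TV" using rmul TV_tmul by blast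
    show "\<forall>h. Lr (\<lambda>u. h (red u)) (tmul a f) = 0"
    proof
      fix h :: "'a word \<Rightarrow> 'k"
      have "Lr (\<lambda>u. h (red u)) (tmul a f) = (\<Sum>x\<in>supp a. \<Sum>y\<in>supp f. h (red (x @ y)) * a x * f y)"
        using Lr_tmul[OF fa ff order_refl order_refl] by simp
      also have "\<dots> = (\<Sum>y\<in>supp f. \<Sum>x\<in>supp a. h (red (x @ y)) * a x * f y)"
        by (rule sum.swap)
      also have "\<dots> = (\<Sum>y\<in>supp f. f y * (\<Sum>x\<in>supp a. h (red (red x @ y)) * a x))"
        by (simp add: sum_distrib_left red_app_left[symmetric] mult_ac)
      also have "\<dots> = (\<Sum>y\<in>supp f. f y * Lr (\<lambda>u. (\<lambda>v. h (red (v @ y))) (red u)) a)"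
        by (simp add: Lr_def)
      also have "\<dots> = 0"
      proof -
        have "Lr (\<lambda>u. (\<lambda>v. h (red (v @ y))) (red u)) a = 0" for y
          using spec[OF conjunct2[OF rmul.IH], of "\<lambda>v. h (red (v @ y))"] by simp
        then show ?thesis by simp
      qed
      finally show "Lr (\<lambda>u. h (red u)) (tmul a f) = 0" .
    qed
  qed
qed




lemma map_the_Some: "None \<notin> set p \<Longrightarrow> map Some (map the p) = p"
  by (induction p) auto

lemma map_the_Some': "None \<notin> set p \<Longrightarrow> map (Some \<circ> the) p = p"
  by (induction p) auto

lemma map_Some_neq[simp]: "map Some x \<noteq> p @ None # s"
proof
  assume h: "map Some x = p @ None # s"
  have "None \<in> set (p @ None # s)" by simp
  then have "None \<in> set (map Some x)" using h by simp
  then show False by auto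
qed

lemma map_Some_neq'[simp]: "p @ None # s \<noteq> map Some x"
  using map_Some_neq by metis

lemma red_bword: "valid_bidx b \<Longrightarrow> red (bword b) = bword b"
  by (cases b) (auto simp: red_noNone red_id_noNone filter_id_conv)

lemma split_None_eq: "map Some p1 @ None # s1 = map Some p2 @ None # s2 \<Longrightarrow> p1 = p2 \<and> s1 = s2"
proof (induction p1 arbitrary: p2)
  case Nil then show ?case by (cases p2) auto
next
  case (Cons a p1) then show ?case by (cases p2) auto
qed

lemma bword_inj: "valid_bidx b1 \<Longrightarrow> valid_bidx b2 \<Longrightarrow> bword b1 = bword b2 \<Longrightarrow> b1 = b2"
proof (cases b1; cases b2)
  fix js t js' t'
  assume v: "valid_bidx b1" "valid_bidx b2" "bword b1 = bword b2"
    and b: "b1 = BXQ js t" "b2 = BXQ js' t'"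
  then have "take t js = take t' js' \<and> map Some (drop t js) = map Some (drop t' js')"
    using split_None_eq[of "take t js" "map Some (drop t js)" "take t' js'" "map Some (drop t' js')"]
    by simp
  then have e: "take t js = take t' js'" "drop t js = drop t' js'" by (auto simp: inj_map_eq_map)
  then have "js = js'" by (metis append_take_drop_id)
  moreover have "t = t'" using e(1) v b \<open>js = js'\<close>
    by (metis length_take min.absorb2 valid_bidx.simps(4))
  ultimately show "b1 = b2" using b by simp
qed (auto simp: map_eq_Cons_conv append_eq_Cons_conv Cons_eq_append_conv)

lemma bword_surj: "\<exists>b. valid_bidx b \<and> bword b = red w"
proof (cases "None \<in> set w")
  case False
  then have r: "red w = map Some (map the w)" by (simp add: red_id_noNone map_the_Some map_the_Some')
  show ?thesis
  proof (cases "w = []")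
    case True then show ?thesis by (intro exI[of _ BOne]) simp
  next
    case False then show ?thesis using r by (intro exI[of _ "BX (map the w)"]) simp
  qed
next
  case True
  then obtain p s where w: "w = p @ None # s" and p: "None \<notin> set p" by (meson split_list_first)
  let ?s = "filter (\<lambda>x. x \<noteq> None) s"
  have s: "None \<notin> set ?s" by simp
  have r: "red w = map Some (map the p) @ None # map Some (map the ?s)"
    using w p s by (simp add: red_noNone map_the_Some map_the_Some')
  show ?thesis
  proof (cases "map the p @ map the ?s = []")
    case True
    then show ?thesis using r by (intro exI[of _ BQ]) simp
  next
    case False
    then show ?thesis using r
      by (intro exI[of _ "BXQ (map the p @ map the ?s) (length p)"]) simp
  qed
qed

lemma mono_tmul: "tmul (Defs.mono u) (Defs.mono v) = (Defs.mono (u @ v) :: 'j word \<Rightarrow> 'k::field)"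
proof
  fix w
  have "tmul (Defs.mono u) (Defs.mono v) w =
    (\<Sum>p\<in>{u}\<times>{v}. if fst p @ snd p = w then (Defs.mono u (fst p) :: 'k) * Defs.mono v (snd p) else 0)"
    by (rule tmul_pairs) (auto simp: Defs.mono_def)
  also have "\<dots> = Defs.mono (u @ v) w" by (auto simp: Defs.mono_def)
  finally show "tmul (Defs.mono u) (Defs.mono v) w = (Defs.mono (u @ v) w :: 'k)" .
qed

lemma tmul_tdiff_l: "tmul f (tdiff a b) = tdiff (tmul f a) (tmul f b)"
  by (auto simp: tmul_def tdiff_def sum_subtractf right_diff_distrib)

lemma tmul_tdiff_r: "tmul (tdiff a b) f = tdiff (tmul a f) (tmul b f)"
  by (auto simp: tmul_def tdiff_def sum_subtractf left_diff_distrib)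

lemma mono_red_ideal: "tdiff (Defs.mono w) (Defs.mono (red w)) \<in> (idealI :: ('j word \<Rightarrow> 'k::field) set)"
proof (induction "length w" arbitrary: w rule: less_induct)
  case less
  show ?case
  proof (cases "red w = w")
    case True
    have "tdiff (Defs.mono w) (Defs.mono (red w)) = (\<lambda>_. (0::'k))" using True by (simp add: tdiff_def)
    then show ?thesis using idealI.zero by simp
  next
    case False
    then obtain u1 v u2 where w: "w = u1 @ None # v @ None # u2" using red_neq_split by blast
    let ?w' = "u1 @ None # v @ u2"
    let ?q = "Defs.mono [None] :: 'j word \<Rightarrow> 'k"
    have G: "tdiff (tmul (tmul ?q (Defs.mono v)) ?q) (tmul ?q (Defs.mono v)) \<in> idealI"
      by (rule idealI.gen) (auto simp: gens_def TV_mono)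
    have "tmul (Defs.mono u1) (tmul (tdiff (tmul (tmul ?q (Defs.mono v)) ?q) (tmul ?q (Defs.mono v))) (Defs.mono u2)) \<in> idealI"
      by (intro idealI.lmul idealI.rmul G TV_mono)
    also have "tmul (Defs.mono u1) (tmul (tdiff (tmul (tmul ?q (Defs.mono v)) ?q) (tmul ?q (Defs.mono v))) (Defs.mono u2))
       = tdiff (Defs.mono w) (Defs.mono ?w')"
      by (simp add: tmul_tdiff_l tmul_tdiff_r mono_tmul w)
    finally have A: "tdiff (Defs.mono w) (Defs.mono ?w') \<in> (idealI :: ('j word \<Rightarrow> 'k) set)" .
    have "length ?w' < length w" using w by simp
    then have B: "tdiff (Defs.mono ?w') (Defs.mono (red ?w')) \<in> (idealI :: ('j word \<Rightarrow> 'k) set)"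
      by (rule less)
    have rr: "red ?w' = red w" using w red_collapse by metis
    have "tdiff (Defs.mono w :: 'j word \<Rightarrow> 'k) (Defs.mono (red w)) =
        tadd (tdiff (Defs.mono w) (Defs.mono ?w')) (tdiff (Defs.mono ?w') (Defs.mono (red ?w')))"
      using rr by (auto simp: tadd_def tdiff_def)
    then show ?thesis using idealI.add[OF A B] by simp
  qed
qed

lemma ideal_scale: "a \<in> idealI \<Longrightarrow> (\<lambda>x. k * a x) \<in> (idealI :: ('j word \<Rightarrow> 'k::field) set)"
proof -
  assume a: "a \<in> idealI"
  let ?e = "(\<lambda>u. if u = [] then k else 0) :: 'j word \<Rightarrow> 'k"
  have e: "?e \<in> TV"
  proof -
    have "supp ?e \<subseteq> {[]}" by auto
    then have "finite (supp ?e)" using finite_subset by blast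
    then show ?thesis by (simp add: TV_def)
  qed
  have "tmul ?e a = (\<lambda>x. k * a x)"
  proof
    fix x
    have "tmul ?e a x = (\<Sum>n\<le>length x. if n = 0 then k * a x else 0)"
      unfolding tmul_def
    proof (rule sum.cong[OF refl])
      fix n assume "n \<in> {..length x}"
      then show "(if take n x = [] then k else 0) * a (drop n x) = (if n = 0 then k * a x else 0)"
        by (cases "n = 0") auto
    qed
    also have "\<dots> = k * a x" by simp
    finally show "tmul ?e a x = k * a x" .
  qed
  then show ?thesis using idealI.lmul[OF e a] by simp
qed

lemma ideal_sum: "finite F \<Longrightarrow> (\<forall>w\<in>F. d w \<in> idealI) \<Longrightarrow>
   (\<lambda>x. \<Sum>w\<in>F. k w * d w x) \<in> (idealI :: ('j word \<Rightarrow> 'k::field) set)"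
proof (induction F rule: finite_induct)
  case empty
  then show ?case using idealI.zero by simp
next
  case (insert w F)
  have "(\<lambda>x. \<Sum>w\<in>insert w F. k w * d w x) = tadd (\<lambda>x. k w * d w x) (\<lambda>x. \<Sum>w\<in>F. k w * d w x)"
    using insert.hyps by (auto simp: tadd_def)
  moreover have "(\<lambda>x. k w * d w x) \<in> idealI" using insert.prems ideal_scale by blast
  moreover have "(\<lambda>x. \<Sum>w\<in>F. k w * d w x) \<in> idealI" using insert by blast
  ultimately show ?case using idealI.add by simp
qed




lemma independence:
  fixes S :: "'j bidx set" and c :: "'j bidx \<Rightarrow> 'k::field"
  assumes S: "finite S" "S \<subseteq> {b. valid_bidx b}"
    and I: "(\<lambda>w. \<Sum>b\<in>S. c b * belem b w) \<in> idealI"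
    and b0: "b0 \<in> S"
  shows "c b0 = 0"
proof -
  let ?g = "(\<lambda>w. \<Sum>b\<in>S. c b * belem b w) :: 'j word \<Rightarrow> 'k"
  let ?h = "(\<lambda>v. if v = bword b0 then 1 else 0) :: 'j word \<Rightarrow> 'k"
  have L0: "Lr (\<lambda>u. ?h (red u)) ?g = 0" using spec[OF conjunct2[OF ideal_inv[OF I]], of ?h] by simp
  have fin: "finite (bword ` S)" using S by simp
  have sub: "supp ?g \<subseteq> bword ` S"
  proof
    fix u assume "u \<in> supp ?g"
    then have nz: "(\<Sum>b\<in>S. c b * belem b u) \<noteq> 0" by simp
    have "\<exists>b\<in>S. c b * belem b u \<noteq> 0"
    proof (rule ccontr)
      assume "\<not> (\<exists>b\<in>S. c b * belem b u \<noteq> 0)"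
      then have "(\<Sum>b\<in>S. c b * belem b u) = 0" by (intro sum.neutral) blast
      then show False using nz by contradiction
    qed
    then obtain b where "b \<in> S" "c b * belem b u \<noteq> 0" by blast
    then have "u = bword b" by (auto simp: belem_def Defs.mono_def split: if_splits)
    then show "u \<in> bword ` S" using \<open>b \<in> S\<close> by blast
  qed
  have gval: "?g (bword b0) = c b0"
  proof -
    have "?g (bword b0) = (\<Sum>b\<in>S. if b = b0 then c b0 else 0)"
    proof (rule sum.cong[OF refl])
      fix b assume "b \<in> S"
      have "bword b0 = bword b \<longleftrightarrow> b = b0"
      proof
        assume "bword b0 = bword b"
        then show "b = b0" using bword_inj[of b0 b] S(2) \<open>b \<in> S\<close> b0 by auto
      qed simp
      then show "c b * belem b (bword b0) = (if b = b0 then c b0 else 0)"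
        by (auto simp: belem_def Defs.mono_def)
    qed
    also have "\<dots> = c b0" using S(1) b0 by simp
    finally show ?thesis .
  qed
  have "Lr (\<lambda>u. ?h (red u)) ?g = (\<Sum>u\<in>bword ` S. ?h (red u) * ?g u)" by (rule Lr_eq[OF fin sub])
  also have "\<dots> = (\<Sum>u\<in>bword ` S. ?h u * ?g u)"
  proof (rule sum.cong[OF refl])
    fix u assume "u \<in> bword ` S"
    then have "red u = u" using red_bword S(2) by blast
    then show "?h (red u) * ?g u = ?h u * ?g u" by simp
  qed
  also have "\<dots> = (\<Sum>u\<in>bword ` S. if u = bword b0 then ?g u else 0)"
    by (rule sum.cong[OF refl]) simp
  also have "\<dots> = ?g (bword b0)" using b0 by (simp only: sum.delta[OF fin]) simp
  finally show ?thesis using L0 gval by simp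
qed

lemma spanning:
  fixes f :: "'j word \<Rightarrow> 'k::field"
  assumes f: "f \<in> TV"
  shows "\<exists>S c. finite S \<and> S \<subseteq> {b. valid_bidx b} \<and>
           tdiff f (\<lambda>w. \<Sum>b\<in>S. c b * belem b w) \<in> idealI"
proof -
  let ?F = "supp f"
  have finF: "finite ?F" using f by (simp add: TV_def)
  define S where "S = {b. valid_bidx b \<and> bword b \<in> red ` ?F}"
  define c where "c b = (\<Sum>w\<in>?F. if red w = bword b then f w else 0)" for b
  have injS: "inj_on bword S" unfolding S_def by (intro inj_onI) (simp add: bword_inj)
  have "bword ` S \<subseteq> red ` ?F" unfolding S_def by blast
  then have "finite (bword ` S)" using finF finite_subset by blast
  then have finS: "finite S" using injS finite_imageD by blast
  have SV: "S \<subseteq> {b. valid_bidx b}" unfolding S_def by blast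
  have G: "(\<Sum>b\<in>S. c b * belem b x) = (\<Sum>w\<in>?F. f w * Defs.mono (red w) x)" for x
  proof -
    have "(\<Sum>b\<in>S. c b * belem b x) = (\<Sum>b\<in>S. \<Sum>w\<in>?F. (if red w = bword b then f w else 0) * belem b x)"
      by (simp add: c_def sum_distrib_right)
    also have "\<dots> = (\<Sum>w\<in>?F. \<Sum>b\<in>S. (if red w = bword b then f w else 0) * belem b x)"
      by (rule sum.swap)
    also have "\<dots> = (\<Sum>w\<in>?F. f w * Defs.mono (red w) x)"
    proof (rule sum.cong[OF refl])
      fix w assume w: "w \<in> ?F"
      obtain b0 where b0: "valid_bidx b0" "bword b0 = red w" using bword_surj by blast
      then have b0S: "b0 \<in> S" using w unfolding S_def by blast
      have "(\<Sum>b\<in>S. (if red w = bword b then f w else 0) * belem b x)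
          = (\<Sum>b\<in>S. if b = b0 then f w * Defs.mono (red w) x else 0)"
      proof (rule sum.cong[OF refl])
        fix b assume "b \<in> S"
        have "red w = bword b \<longleftrightarrow> b = b0"
        proof
          assume "red w = bword b"
          then show "b = b0" using bword_inj[of b b0] SV \<open>b \<in> S\<close> b0 by auto
        qed (simp add: b0)
        then show "(if red w = bword b then f w else 0) * belem b x
            = (if b = b0 then f w * Defs.mono (red w) x else 0)"
          using b0 by (auto simp: belem_def)
      qed
      also have "\<dots> = f w * Defs.mono (red w) x" using finS b0S by simp
      finally show "(\<Sum>b\<in>S. (if red w = bword b then f w else 0) * belem b x) = f w * Defs.mono (red w) x" .
    qed
    finally show ?thesis .
  qed
  have fx: "f x = (\<Sum>w\<in>?F. f w * Defs.mono w x)" for x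
  proof -
    have "(\<Sum>w\<in>?F. f w * Defs.mono w x) = (\<Sum>w\<in>?F. if w = x then f x else 0)"
      by (rule sum.cong[OF refl]) (auto simp: Defs.mono_def)
    also have "\<dots> = f x" using finF by (auto simp: sum.delta')
    finally show ?thesis by simp
  qed
  have "tdiff f (\<lambda>w. \<Sum>b\<in>S. c b * belem b w)
      = (\<lambda>x. \<Sum>w\<in>?F. f w * tdiff (Defs.mono w) (Defs.mono (red w)) x)"
  proof
    fix x
    show "tdiff f (\<lambda>w. \<Sum>b\<in>S. c b * belem b w) x
        = (\<Sum>w\<in>?F. f w * tdiff (Defs.mono w) (Defs.mono (red w)) x)"
      unfolding G tdiff_def using fx[of x]
      by (simp add: right_diff_distrib sum_subtractf)
  qed
  moreover have "(\<lambda>x. \<Sum>w\<in>?F. f w * tdiff (Defs.mono w) (Defs.mono (red w)) x) \<in> idealI"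
    by (rule ideal_sum[OF finF]) (simp add: mono_red_ideal)
  ultimately show ?thesis using finS SV by (intro exI[of _ S] exI[of _ c]) simp
qed

theorem proposition3p2:
  fixes dummy :: "'j itself" and dummyk :: "'k::field itself"
  shows
    "(\<forall>f::'j word \<Rightarrow> 'k. f \<in> TV \<longrightarrow>
        (\<exists>S c. finite S \<and> S \<subseteq> {b. valid_bidx b} \<and>
           tdiff f (\<lambda>w. \<Sum>b\<in>S. c b * belem b w) \<in> idealI))
     \<and>
     (\<forall>(S::'j bidx set) (c::'j bidx \<Rightarrow> 'k). finite S \<and> S \<subseteq> {b. valid_bidx b} \<and>
        (\<lambda>w. \<Sum>b\<in>S. c b * belem b w) \<in> idealI \<longrightarrow> (\<forall>b\<in>S. c b = 0))"
  using spanning independence by blast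


end
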